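(* The category $\mathbf{T_D Top}$ of $T_D$-spaces and continuous maps is a full coreflective subcategory of the category $\mathbf{Top_{LC}}$ of topological spaces and locally closed maps. For each space $X$, the coreflection is the inclusion $X_D\subseteq X$, where $X_D$ is the subspace of locally closed points of $X$: for every $T_D$-space $Y$ and locally closed map $f:Y\to X$ there is a unique locally closed (continuous) map $\widehat f:Y\to X_D$ whose composite with the inclusion is $f$.
   Context: A point $x$ of a space $X$ is locally closed if $\{x\}$ is closed in some open neighborhood of $x$. $X$ is a $T_D$-space if every point is locally closed. A continuous map is locally closed if it maps locally closed points to locally closed points (every continuous map between $T_D$-spaces is locally closed). *)

theory Defs
  imports "HOL-Analysis.Analysis"
begin

definition locally_closed_point :: "'a topology \<Rightarrow> 'a \<Rightarrow> bool" where
  "locally_closed_point X x \<longleftrightarrow> x \<in> topspace X \<and>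
     (\<exists>U. openin X U \<and> x \<in> U \<and> closedin (subtopology X U) {x})"

definition TD_space :: "'a topology \<Rightarrow> bool" where
  "TD_space X \<longleftrightarrow> (\<forall>x\<in>topspace X. locally_closed_point X x)"

definition locally_closed_map :: "'a topology \<Rightarrow> 'b topology \<Rightarrow> ('a \<Rightarrow> 'b) \<Rightarrow> bool" where
  "locally_closed_map X Y f \<longleftrightarrow> continuous_map X Y f \<and>
     (\<forall>x\<in>topspace X. locally_closed_point X x \<longrightarrow> locally_closed_point Y (f x))"

definition TD_part :: "'a topology \<Rightarrow> 'a topology" where
  "TD_part X = subtopology X {x \<in> topspace X. locally_closed_point X x}"

end

theory Submission
  imports Defs
begin

lemma lcp_intro: "x \<in> topspace X \<Longrightarrow> openin X U \<Longrightarrow> x \<in> U \<Longrightarrow> closedin (subtopology X U) {x} \<Longrightarrow> locally_closed_point X x"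
  unfolding locally_closed_point_def by blast

lemma TD_part_TD: "TD_space (TD_part X)"
  unfolding TD_space_def
proof
  fix x assume xin: "x \<in> topspace (TD_part X)"
  let ?S = "{x \<in> topspace X. locally_closed_point X x}"
  have xS: "x \<in> ?S" using xin by (simp add: TD_part_def)
  then obtain U where U: "openin X U" "x \<in> U" "closedin (subtopology X U) {x}"
    by (auto simp: locally_closed_point_def)
  then obtain C where C: "closedin X C" "{x} = C \<inter> U" by (auto simp: closedin_subtopology)
  have op: "openin (TD_part X) (?S \<inter> U)" unfolding TD_part_def
    using U(1) by (auto simp: openin_subtopology)
  moreover have cl: "closedin (subtopology (TD_part X) (?S \<inter> U)) {x}"
    unfolding TD_part_def subtopology_subtopology closedin_subtopology
  proof (rule exI[of _ C], intro conjI)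
    show "closedin X C" by (rule C(1))
    show "{x} = C \<inter> (?S \<inter> (?S \<inter> U))" using C(2) xS by blast
  qed
  have "x \<in> ?S \<inter> U" using xS U(2) by blast
  then show "locally_closed_point (TD_part X) x"
    by (rule lcp_intro[OF xin op _ cl])
qed

theorem theorem5p21:
  fixes X :: "'a topology"
  shows
    \<comment> \<open>fullness: every continuous map between T_D-spaces is locally closed\<close>
    "(\<forall>(A :: 'b topology) (B :: 'c topology) g.
        TD_space A \<and> TD_space B \<and> continuous_map A B g \<longrightarrow> locally_closed_map A B g)
     \<and> TD_space (TD_part X)
     \<and> locally_closed_map (TD_part X) X id
     \<and> (\<forall>(Y :: 'b topology) f. TD_space Y \<and> locally_closed_map Y X f \<longrightarrow>
          (\<exists>fh. locally_closed_map Y (TD_part X) fh \<and> (\<forall>y\<in>topspace Y. id (fh y) = f y)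
             \<and> (\<forall>h. locally_closed_map Y (TD_part X) h \<and> (\<forall>y\<in>topspace Y. id (h y) = f y)
                   \<longrightarrow> (\<forall>y\<in>topspace Y. h y = fh y))))"
proof (intro conjI allI impI)
  fix A :: "'b topology" and B :: "'c topology" and g
  assume ab: "TD_space A \<and> TD_space B \<and> continuous_map A B g"
  have "\<forall>x\<in>topspace A. locally_closed_point A x \<longrightarrow> locally_closed_point B (g x)"
  proof (intro ballI impI)
    fix x assume "x \<in> topspace A"
    then have "g x \<in> topspace B" using ab continuous_map_funspace by blast
    then show "locally_closed_point B (g x)" using ab unfolding TD_space_def by blast
  qed
  then show "locally_closed_map A B g"
    unfolding locally_closed_map_def using ab by blast
next
  show "TD_space (TD_part X)" by (rule TD_part_TD)
next
  show "locally_closed_map (TD_part X) X id"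
    unfolding locally_closed_map_def TD_part_def
    by (auto simp: continuous_map_from_subtopology)
next
  fix Y :: "'b topology" and f
  assume a: "TD_space Y \<and> locally_closed_map Y X f"
  have img: "f ` topspace Y \<subseteq> {x \<in> topspace X. locally_closed_point X x}"
  proof
    fix z assume "z \<in> f ` topspace Y"
    then obtain y where y: "y \<in> topspace Y" "z = f y" by blast
    have "locally_closed_point Y y" using a y(1) unfolding TD_space_def by blast
    then have "locally_closed_point X (f y)" using a y(1) unfolding locally_closed_map_def by blast
    then show "z \<in> {x \<in> topspace X. locally_closed_point X x}"
      using y(2) unfolding locally_closed_point_def by blast
  qed
  have c: "continuous_map Y (TD_part X) f"
    unfolding TD_part_def using a img
    unfolding continuous_map_in_subtopology using a img unfolding locally_closed_map_def by blast
  have lc: "locally_closed_map Y (TD_part X) f"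
    unfolding locally_closed_map_def
  proof (intro conjI ballI impI)
    show "continuous_map Y (TD_part X) f" by (rule c)
    fix y assume "y \<in> topspace Y"
    then have "f y \<in> topspace (TD_part X)" using c continuous_map_funspace by blast
    then show "locally_closed_point (TD_part X) (f y)" using TD_part_TD[of X] unfolding TD_space_def by blast
  qed
  show "\<exists>fh. locally_closed_map Y (TD_part X) fh \<and> (\<forall>y\<in>topspace Y. id (fh y) = f y)
             \<and> (\<forall>h. locally_closed_map Y (TD_part X) h \<and> (\<forall>y\<in>topspace Y. id (h y) = f y)
                   \<longrightarrow> (\<forall>y\<in>topspace Y. h y = fh y))"
    proof (rule exI[of _ f], intro conjI allI impI ballI)
    show "locally_closed_map Y (TD_part X) f" by (rule lc)
  next
    fix y assume "y \<in> topspace Y" show "id (f y) = f y" by (simp only: id_apply)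
  next
    fix h y assume h: "locally_closed_map Y (TD_part X) h \<and> (\<forall>y\<in>topspace Y. id (h y) = f y)"
      and y: "y \<in> topspace Y"
    then show "h y = f y" by (metis id_apply)
  qed
qed

end
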